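(* Let $0<V\le1$ and let $P^{col}_{BB84}$ be the box on $a,b,x,y\in\{0,1\}$ given by $$P^{col}_{BB84}(ab|xy)=\frac{1+(-1)^{a\oplus b\oplus x\cdot y}\big[\delta_{x,y}V+\tfrac{1-V}{2}\big]+(-1)^{a\oplus b\oplus x\oplus y}\tfrac{1-V}{2}}{4}.$$ Let $\{|f_1\rangle,|f_2\rangle\}$ and $\{|g_1\rangle,|g_2\rangle\}$ be any two mutually unbiased orthonormal bases of $\mathbb{C}^2$ ($|\langle f_i|g_j\rangle|^2=1/2$ for all $i,j$), and let $\Pi_{b|0}=|f_{b+1}\rangle\langle f_{b+1}|$, $\Pi_{b|1}=|g_{b+1}\rangle\langle g_{b+1}|$. Then for every $V>0$, $P^{col}_{BB84}$ cannot be written as $$P^{col}_{BB84}(ab|xy)=\sum_{\chi,\zeta}p(\chi,\zeta)\,\delta_{a,f(x,\chi)}\,\langle\psi_\zeta|\Pi_{b|y}|\psi_\zeta\rangle\quad\forall a,b,x,y,$$ for any probability distribution $p(\chi,\zeta)$ (finitely many terms), any deterministic response functions $f(\cdot,\chi):\{0,1\}\to\{0,1\}$, and any pure qubit states $|\psi_\zeta\rangle\in\mathbb{C}^2$.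
   Context: $\oplus$ denotes addition modulo 2 and $\delta_{x,y}$ the Kronecker delta. The displayed decomposition is a convex mixture of the extremal points of the set of unsteerable boxes (boxes admitting a local hidden variable–local hidden state model) of the steering scenario in which Alice performs two black-box dichotomic measurements and Bob performs the two given qubit projective measurements. *)

theory Defs
  imports "HOL-Analysis.Analysis"
begin

text \<open>Qubit vectors are elements of complex^2 (components indexed 1, 2).
  braket u v is the Dirac inner product, conjugate-linear in the first argument.\<close>
definition braket :: "complex ^ 2 \<Rightarrow> complex ^ 2 \<Rightarrow> complex" where
  "braket u v = (\<Sum>i\<in>UNIV. cnj (u $ i) * v $ i)"

definition P_col_BB84 :: "real \<Rightarrow> nat \<Rightarrow> nat \<Rightarrow> nat \<Rightarrow> nat \<Rightarrow> real" where
  "P_col_BB84 V a b x y =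
     (1 + (-1) ^ (a + b + x * y) * ((if x = y then V else 0) + (1 - V) / 2)
        + (-1) ^ (a + b + x + y) * ((1 - V) / 2)) / 4"

text \<open>Orthonormal basis {e 0, e 1} of complex^2 (e b stands for the paper's vector with index b+1).\<close>
definition orthonormal_basis2 :: "(nat \<Rightarrow> complex ^ 2) \<Rightarrow> bool" where
  "orthonormal_basis2 e \<longleftrightarrow>
     (\<forall>i\<in>{0,1}. \<forall>j\<in>{0,1}. braket (e i) (e j) = (if i = j then 1 else 0))"

text \<open>Bob's measurement: Pi_{b|0} = |F b><F b|, Pi_{b|1} = |G b><G b|;
  bob_prob F G y b psi = <psi|Pi_{b|y}|psi>.\<close>
definition bob_prob :: "(nat \<Rightarrow> complex ^ 2) \<Rightarrow> (nat \<Rightarrow> complex ^ 2) \<Rightarrow> nat \<Rightarrow> nat \<Rightarrow> complex ^ 2 \<Rightarrow> real" where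
  "bob_prob F G y b psi = (cmod (braket (if y = 0 then F b else G b) psi))\<^sup>2"

end

theory Submission
  imports Defs
begin

lemma alg2:
  fixes u1 u2 v1 v2 w1 w2 :: complex
  assumes "cnj u1 * u1 + cnj u2 * u2 = 1" "cnj v1 * v1 + cnj v2 * v2 = 1"
   "cnj v1 * u1 + cnj v2 * u2 = 0" "cnj v1 * w1 + cnj v2 * w2 = 0"
  shows "w1 = (cnj u1 * w1 + cnj u2 * w2) * u1 \<and> w2 = (cnj u1 * w1 + cnj u2 * w2) * u2"
proof -
  define D where "D = u2 * w1 - w2 * u1"
  have a1: "cnj v2 * w2 = - (cnj v1 * w1)" using assms(4) by (simp only: add_eq_0_iff)
  have a2: "cnj v2 * u2 = - (cnj v1 * u1)" using assms(3) by (simp only: add_eq_0_iff)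
  have b1: "cnj v1 * w1 = - (cnj v2 * w2)" using assms(4) by (simp only: add_eq_0_iff2)
  have b2: "cnj v1 * u1 = - (cnj v2 * u2)" using assms(3) by (simp only: add_eq_0_iff2)
  have d1: "cnj v1 * D = 0"
  proof -
    have "cnj v1 * D = u2 * (cnj v1 * w1) - w2 * (cnj v1 * u1)" unfolding D_def by (simp add: algebra_simps)
    also have "\<dots> = u2 * (- (cnj v2 * w2)) - w2 * (- (cnj v2 * u2))" using b1 b2 by simp
    also have "\<dots> = 0" by (simp add: algebra_simps)
    finally show ?thesis .
  qed
  have d2: "cnj v2 * D = 0"
  proof -
    have "cnj v2 * D = w1 * (cnj v2 * u2) - u1 * (cnj v2 * w2)" unfolding D_def by (simp add: algebra_simps)
    also have "\<dots> = w1 * (- (cnj v1 * u1)) - u1 * (- (cnj v1 * w1))" using a1 a2 by simp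
    also have "\<dots> = 0" by (simp add: algebra_simps)
    finally show ?thesis .
  qed
  have "D = D * (cnj v1 * v1 + cnj v2 * v2)" using assms(2) by simp
  also have "\<dots> = v1 * (cnj v1 * D) + v2 * (cnj v2 * D)" by (simp add: algebra_simps)
  finally have D0: "D = 0" using d1 d2 by simp
  have g1: "w1 - (cnj u1 * w1 + cnj u2 * w2) * u1 = w1 * (1 - (cnj u1 * u1 + cnj u2 * u2)) + cnj u2 * D"
    unfolding D_def by (simp add: algebra_simps)
  have g2: "w2 - (cnj u1 * w1 + cnj u2 * w2) * u2 = w2 * (1 - (cnj u1 * u1 + cnj u2 * u2)) - cnj u1 * D"
    unfolding D_def by (simp add: algebra_simps)
  show ?thesis using g1 g2 D0 assms(1) by simp
qed

lemma proj2:
  fixes u v w :: "complex^2"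
  assumes "braket u u = 1" "braket v v = 1" "braket v u = 0" "braket v w = 0"
  shows "w $ i = braket u w * u $ i"
proof -
  have "w $ 1 = braket u w * u $ 1 \<and> w $ 2 = braket u w * u $ 2"
    using alg2[of "u$1" "u$2" "v$1" "v$2" "w$1" "w$2"] assms
    by (simp add: braket_def sum_2 mult.commute)
  then show ?thesis using exhaust_2[of i] by auto
qed

lemma braket_scale:
  fixes u w g :: "complex^2"
  assumes "\<And>i. w $ i = c * u $ i"
  shows "braket g w = c * braket g u"
  using assms by (simp add: braket_def sum_distrib_left ac_simps)

lemma braket_scale2:
  fixes u w :: "complex^2"
  assumes "\<And>i. w $ i = c * u $ i"
  shows "braket w w = cnj c * c * braket u u"
  using assms by (simp add: braket_def sum_distrib_left ac_simps)

lemma key: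
  fixes u v w g :: "complex^2"
  assumes "braket u u = 1" "braket v v = 1" "braket v u = 0" "braket v w = 0"
    "braket w w = 1" "(cmod (braket u g))\<^sup>2 = 1/2"
  shows "(cmod (braket g w))\<^sup>2 = 1/2"
proof -
  define c where "c = braket u w"
  have w: "\<And>i. w $ i = c * u $ i" using proj2[OF assms(1-4)] c_def by simp
  have "cnj c * c = 1" using braket_scale2[OF w] assms(1,5) by simp
  hence c1: "(cmod c)\<^sup>2 = 1"
    by (metis complex_norm_square mult.commute of_real_eq_1_iff)
  have gu: "braket g u = cnj (braket u g)"
    by (simp add: braket_def mult.commute)
  have "braket g w = c * braket g u" by (rule braket_scale[OF w])
  hence "(cmod (braket g w))\<^sup>2 = (cmod c)\<^sup>2 * (cmod (braket u g))\<^sup>2"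
    by (simp add: gu norm_mult power_mult_distrib)
  thus ?thesis using c1 assms(6) by simp
qed

theorem theorem2:
  fixes V :: real and F G :: "nat \<Rightarrow> complex ^ 2"
  assumes "0 < V" and "V \<le> 1"
    and "orthonormal_basis2 F" and "orthonormal_basis2 G"
    and "\<forall>i\<in>{0,1}. \<forall>j\<in>{0,1}. (cmod (braket (F i) (G j)))\<^sup>2 = 1 / 2"
  shows "\<not> (\<exists>(X :: nat set) (Z :: nat set) (p :: nat \<Rightarrow> nat \<Rightarrow> real)
              (f :: nat \<Rightarrow> nat \<Rightarrow> nat) (psi :: nat \<Rightarrow> complex ^ 2).
            finite X \<and> finite Z \<and>
            (\<forall>c\<in>X. \<forall>z\<in>Z. 0 \<le> p c z) \<and>
            (\<Sum>c\<in>X. \<Sum>z\<in>Z. p c z) = 1 \<and>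
            (\<forall>c\<in>X. \<forall>x\<in>{0,1}. f x c \<in> {0,1}) \<and>
            (\<forall>z\<in>Z. braket (psi z) (psi z) = 1) \<and>
            (\<forall>a\<in>{0,1}. \<forall>b\<in>{0,1}. \<forall>x\<in>{0,1}. \<forall>y\<in>{0,1}.
               P_col_BB84 V a b x y =
                 (\<Sum>c\<in>X. \<Sum>z\<in>Z. p c z * (if a = f x c then 1 else 0)
                                     * bob_prob F G y b (psi z))))"
proof
  assume "\<exists>(X :: nat set) (Z :: nat set) (p :: nat \<Rightarrow> nat \<Rightarrow> real)
              (f :: nat \<Rightarrow> nat \<Rightarrow> nat) (psi :: nat \<Rightarrow> complex ^ 2).
            finite X \<and> finite Z \<and>
            (\<forall>c\<in>X. \<forall>z\<in>Z. 0 \<le> p c z) \<and>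
            (\<Sum>c\<in>X. \<Sum>z\<in>Z. p c z) = 1 \<and>
            (\<forall>c\<in>X. \<forall>x\<in>{0,1}. f x c \<in> {0,1}) \<and>
            (\<forall>z\<in>Z. braket (psi z) (psi z) = 1) \<and>
            (\<forall>a\<in>{0,1}. \<forall>b\<in>{0,1}. \<forall>x\<in>{0,1}. \<forall>y\<in>{0,1}.
               P_col_BB84 V a b x y =
                 (\<Sum>c\<in>X. \<Sum>z\<in>Z. p c z * (if a = f x c then 1 else 0)
                                     * bob_prob F G y b (psi z)))"
  then obtain X Z :: "nat set" and p :: "nat \<Rightarrow> nat \<Rightarrow> real"
    and f :: "nat \<Rightarrow> nat \<Rightarrow> nat" and psi :: "nat \<Rightarrow> complex ^ 2" where fX: "finite X" and fZ: "finite Z"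
    and pnn: "\<forall>c\<in>X. \<forall>z\<in>Z. 0 \<le> p c z"
    and "(\<Sum>c\<in>X. \<Sum>z\<in>Z. p c z) = 1"
    and fr: "\<forall>c\<in>X. \<forall>x\<in>{0,1}. f x c \<in> {0,1}"
    and nrm: "\<forall>z\<in>Z. braket (psi z) (psi z) = 1"
    and eq: "\<forall>a\<in>{0,1}. \<forall>b\<in>{0,1}. \<forall>x\<in>{0,1}. \<forall>y\<in>{0,1}.
               P_col_BB84 V a b x y =
                 (\<Sum>c\<in>X. \<Sum>z\<in>Z. p c z * (if a = f x c then 1 else 0)
                                     * bob_prob F G y b (psi z))"
    by blast
  note eqr = eq[rule_format]
  have bnn: "0 \<le> bob_prob F G y b w" for y b w by (simp add: bob_prob_def)
  have zero: "p c z * bob_prob F G 0 (1 - a) (psi z) = 0"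
    if c: "c \<in> X" and z: "z \<in> Z" and a: "a \<in> {0,1}" and fa: "f 0 c = a" for c z a
  proof -
    have "P_col_BB84 V a (1 - a) 0 0 = 0" using a by (auto simp: P_col_BB84_def field_simps)
    moreover have "P_col_BB84 V a (1 - a) 0 0 = (\<Sum>c\<in>X. \<Sum>z\<in>Z. p c z * (if a = f 0 c then 1 else 0)
                                     * bob_prob F G 0 (1 - a) (psi z))"
      using eqr[of a "1 - a" 0 0] a by auto
    ultimately have s: "(\<Sum>c\<in>X. \<Sum>z\<in>Z. p c z * (if a = f 0 c then 1 else 0)
                                     * bob_prob F G 0 (1 - a) (psi z)) = 0" by simp
    define t where "t c z = p c z * (if a = f 0 c then 1 else 0) * bob_prob F G 0 (1 - a) (psi z)" for c z
    have s': "(\<Sum>c\<in>X. \<Sum>z\<in>Z. t c z) = 0" using s unfolding t_def .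
    have nn: "\<forall>c\<in>X. \<forall>z\<in>Z. 0 \<le> t c z"
      unfolding t_def using pnn bnn by simp
    have inn: "\<forall>c\<in>X. 0 \<le> (\<Sum>z\<in>Z. t c z)"
      using nn by (simp add: sum_nonneg)
    have "\<forall>c\<in>X. (\<Sum>z\<in>Z. t c z) = 0"
      using sum_nonneg_eq_0_iff[OF fX, of "\<lambda>c. \<Sum>z\<in>Z. t c z"] inn s' by blast
    hence "\<forall>c\<in>X. \<forall>z\<in>Z. t c z = 0"
      using nn sum_nonneg_eq_0_iff[OF fZ] by metis
    hence "\<forall>c\<in>X. \<forall>z\<in>Z. p c z * (if a = f 0 c then 1 else 0)
                                     * bob_prob F G 0 (1 - a) (psi z) = 0"
      unfolding t_def .
    hence "p c z * (if a = f 0 c then 1 else 0) * bob_prob F G 0 (1 - a) (psi z) = 0"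
      using c z by blast
    thus ?thesis using fa by simp
  qed
  have half: "p c z * bob_prob F G 1 b (psi z) = p c z / 2"
    if c: "c \<in> X" and z: "z \<in> Z" and b: "b \<in> {0,1}" for c z b
  proof (cases "p c z = 0")
    case True thus ?thesis by simp
  next
    case False
    define a where "a = f 0 c"
    have a: "a \<in> {0,1}" using fr c a_def by auto
    have "bob_prob F G 0 (1 - a) (psi z) = 0" using zero[OF c z a] a_def False by simp
    hence o: "braket (F (1 - a)) (psi z) = 0" by (simp add: bob_prob_def)
    have "(cmod (braket (G b) (psi z)))\<^sup>2 = 1/2"
    proof (rule key[of "F a" "F (1 - a)"])
      show "braket (F a) (F a) = 1" "braket (F (1 - a)) (F (1 - a)) = 1"
        "braket (F (1 - a)) (F a) = 0"
        using assms(3) a unfolding orthonormal_basis2_def by auto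
      show "braket (F (1 - a)) (psi z) = 0" by (rule o)
      show "braket (psi z) (psi z) = 1" using nrm z by auto
      show "(cmod (braket (F a) (G b)))\<^sup>2 = 1/2" using assms(5) a b by auto
    qed
    thus ?thesis by (simp add: bob_prob_def)
  qed
  have e1: "P_col_BB84 V 0 0 1 1 = (\<Sum>c\<in>X. \<Sum>z\<in>Z. p c z * (if 0 = f 1 c then 1 else 0) * bob_prob F G 1 0 (psi z))"
    using eqr[of 0 0 1 1] by simp
  have e2: "P_col_BB84 V 0 1 1 1 = (\<Sum>c\<in>X. \<Sum>z\<in>Z. p c z * (if 0 = f 1 c then 1 else 0) * bob_prob F G 1 1 (psi z))"
    using eqr[of 0 1 1 1] by simp
  have "P_col_BB84 V 0 0 1 1 - P_col_BB84 V 0 1 1 1 =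
     (\<Sum>c\<in>X. \<Sum>z\<in>Z. p c z * (if 0 = f 1 c then 1 else 0) * bob_prob F G 1 0 (psi z)
        - p c z * (if 0 = f 1 c then 1 else 0) * bob_prob F G 1 1 (psi z))"
    unfolding e1 e2 by (simp only: sum_subtractf)
  also have "\<dots> = 0"
  proof (rule sum.neutral, rule ballI, rule sum.neutral, rule ballI)
    fix c z assume c: "c \<in> X" and z: "z \<in> Z"
    have "p c z * bob_prob F G 1 0 (psi z) = p c z * bob_prob F G 1 1 (psi z)"
      using half[OF c z, of 0] half[OF c z, of 1] by (metis insertI1 insertI2 singletonI)
    thus "p c z * (if 0 = f 1 c then 1 else 0) * bob_prob F G 1 0 (psi z)
        - p c z * (if 0 = f 1 c then 1 else 0) * bob_prob F G 1 1 (psi z) = 0"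
      by (simp add: mult.commute mult.left_commute)
  qed
  finally have "P_col_BB84 V 0 0 1 1 - P_col_BB84 V 0 1 1 1 = 0" .
  moreover have "P_col_BB84 V 0 0 1 1 = (1 - V) / 4" by (simp add: P_col_BB84_def field_simps, linarith?)
  moreover have "P_col_BB84 V 0 1 1 1 = (1 + V) / 4" by (simp add: P_col_BB84_def field_simps, linarith?)
  ultimately show False using assms(1) by simp
qed

end
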